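(* For any two groups of agents with additive utilities, with $n=n_1+n_2$ agents in total, there exists an allocation that is EF$(n-1)$ for every agent.
   Context: There is a finite set $G$ of goods and two groups $A_1,A_2$ with $n_1,n_2\ge1$ agents. Each agent has an additive utility $u_a(X)=\sum_{g\in X}u_a(\{g\})\ge0$. An allocation is a partition $(G_1,G_2)$ of $G$; agents of $A_i$ get $u_a(G_i)$. For integer $c\ge0$, the allocation is EF$c$ for $a\in A_i$ if there is $C\subseteq G_{3-i}$ with $|C|\le c$ and $u_a(G_i)\ge u_a(G_{3-i}\setminus C)$. *)

theory Defs
  imports Complex_Main
begin

definition util :: "('a \<Rightarrow> 'g \<Rightarrow> real) \<Rightarrow> 'a \<Rightarrow> 'g set \<Rightarrow> real" where
  "util u a X = (\<Sum>g\<in>X. u a g)"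

definition EFc :: "nat \<Rightarrow> ('a \<Rightarrow> 'g \<Rightarrow> real) \<Rightarrow> 'a \<Rightarrow> 'g set \<Rightarrow> 'g set \<Rightarrow> bool" where
  "EFc c u a Own Other \<longleftrightarrow>
     (\<exists>C. C \<subseteq> Other \<and> card C \<le> c \<and> util u a Own \<ge> util u a (Other - C))"

end

theory Submission imports Defs begin

lemma homog_nontrivial:
  fixes c :: "'i \<Rightarrow> 'v \<Rightarrow> real"
  assumes "finite I" "finite V" "card I < card V"
  shows "\<exists>y. (\<exists>v\<in>V. y v \<noteq> 0) \<and> (\<forall>i\<in>I. (\<Sum>v\<in>V. c i v * y v) = 0)"
  using assms
proof (induction I arbitrary: V c rule: finite_induct)
  case empty
  then obtain v where "v \<in> V" by fastforce
  then show ?case by (rule_tac x="\<lambda>_. 1" in exI) auto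
next
  case (insert i I V c)
  show ?case
  proof (cases "\<forall>v\<in>V. c i v = 0")
    case True
    have "card I < card V" using insert by simp
    from insert.IH[OF insert.prems(1) this, of c] obtain y where
      y: "\<exists>v\<in>V. y v \<noteq> 0" "\<forall>j\<in>I. (\<Sum>v\<in>V. c j v * y v) = 0" by blast
    show ?thesis using y True by (rule_tac x=y in exI) auto
  next
    case False
    then obtain v0 where v0: "v0 \<in> V" "c i v0 \<noteq> 0" by blast
    define V' where "V' = V - {v0}"
    define c' where "c' = (\<lambda>j v. c j v - c j v0 * c i v / c i v0)"
    have fV': "finite V'" using insert V'_def by simp
    have cV: "card V' = card V - 1" using v0 insert V'_def by simp
    have "card I < card V'" using insert cV by simp
    from insert.IH[OF fV' this, of c'] obtain y' where
      y': "\<exists>v\<in>V'. y' v \<noteq> 0" "\<forall>j\<in>I. (\<Sum>v\<in>V'. c' j v * y' v) = 0" by blast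
    define y where "y = (\<lambda>v. if v = v0 then - (\<Sum>w\<in>V'. c i w * y' w) / c i v0 else y' v)"
    have split: "(\<Sum>v\<in>V. f v) = f v0 + (\<Sum>v\<in>V'. f v)" for f :: "'v \<Rightarrow> real"
      using v0 insert V'_def by (simp add: sum.remove)
    have yV': "(\<Sum>v\<in>V'. g v * y v) = (\<Sum>v\<in>V'. g v * y' v)" for g
      by (rule sum.cong) (auto simp: y_def V'_def)
    have eqi: "(\<Sum>v\<in>V. c i v * y v) = 0"
      using v0 by (simp add: split yV') (simp add: y_def)
    have eqj: "(\<Sum>v\<in>V. c j v * y v) = 0" if "j \<in> I" for j
    proof -
      have "(\<Sum>v\<in>V. c j v * y v) = c j v0 * y v0 + (\<Sum>v\<in>V'. c j v * y' v)"
        by (simp add: split yV')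
      also have "c j v0 * y v0 = - (\<Sum>w\<in>V'. c j v0 * c i w / c i v0 * y' w)"
        by (simp add: y_def sum_divide_distrib sum_distrib_left algebra_simps)
      also have "- (\<Sum>w\<in>V'. c j v0 * c i w / c i v0 * y' w) + (\<Sum>v\<in>V'. c j v * y' v)
          = (\<Sum>v\<in>V'. c' j v * y' v)"
        by (simp add: c'_def sum_subtractf[symmetric] algebra_simps)
      also have "\<dots> = 0" using y' that by blast
      finally show ?thesis .
    qed
    have "\<exists>v\<in>V. y v \<noteq> 0"
      using y' by (auto simp: y_def V'_def)
    then show ?thesis using eqi eqj by blast
  qed
qed

lemma reduce:
  fixes G :: "'g set" and A1 A2 :: "'a set" and u :: "'a \<Rightarrow> 'g \<Rightarrow> real" and x :: "'g \<Rightarrow> real"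
  assumes finG: "finite G" and finI: "finite (A1 \<union> A2)" and ne: "A1 \<union> A2 \<noteq> {}" and disj: "A1 \<inter> A2 = {}"
    and bx: "\<forall>g\<in>G. 0 \<le> x g \<and> x g \<le> 1"
    and c1: "\<forall>a\<in>A1. 0 \<le> (\<Sum>g\<in>G. u a g * (2 * x g - 1))"
    and c2: "\<forall>a\<in>A2. (\<Sum>g\<in>G. u a g * (2 * x g - 1)) \<le> 0"
    and big: "card (A1 \<union> A2) \<le> card {g\<in>G. 0 < x g \<and> x g < 1}"
  shows "\<exists>x'. (\<forall>g\<in>G. 0 \<le> x' g \<and> x' g \<le> 1)
     \<and> (\<forall>a\<in>A1. 0 \<le> (\<Sum>g\<in>G. u a g * (2 * x' g - 1)))
     \<and> (\<forall>a\<in>A2. (\<Sum>g\<in>G. u a g * (2 * x' g - 1)) \<le> 0)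
     \<and> card {g\<in>G. 0 < x' g \<and> x' g < 1} < card {g\<in>G. 0 < x g \<and> x g < 1}"
proof -
  define I where "I = A1 \<union> A2"
  define Fr where "Fr = {g\<in>G. 0 < x g \<and> x g < 1}"
  have finFr: "finite Fr" using finG Fr_def by simp
  obtain F' where F': "F' \<subseteq> Fr" "card F' = card I"
    using obtain_subset_with_card_n[of "card I" Fr] big I_def Fr_def by metis
  have finF': "finite F'" using F' finFr finite_subset by blast
  have F'G: "F' \<subseteq> G" using F' Fr_def by auto
  define e where "e = (\<lambda>a. if a \<in> A1 then (1::real) else -1)"
  define V where "V = insert None (Some ` F')"
  have cardV: "card V = card I + 1"
    using finF' F' by (simp add: V_def card_image)
  define c where "c = (\<lambda>a v. case v of None \<Rightarrow> - e a | Some f \<Rightarrow> u a f)"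
  obtain y where y: "\<exists>v\<in>V. y v \<noteq> 0" "\<forall>a\<in>I. (\<Sum>v\<in>V. c a v * y v) = 0"
    using homog_nontrivial[of I V c] finI finF' cardV I_def V_def by auto
  have sumV: "(\<Sum>v\<in>V. c a v * y v) = - e a * y None + (\<Sum>f\<in>F'. u a f * y (Some f))" for a
    using finF' by (simp add: V_def c_def sum.reindex)
  define \<sigma> where "\<sigma> = (if y None \<ge> 0 then (1::real) else -1)"
  define d where "d = (\<lambda>f. \<sigma> * y (Some f))"
  define s where "s = \<sigma> * y None"
  have s0: "s \<ge> 0" by (simp add: s_def \<sigma>_def)
  have key: "(\<Sum>f\<in>F'. u a f * d f) = e a * s" if "a \<in> I" for a
  proof -
    have "(\<Sum>f\<in>F'. u a f * y (Some f)) = e a * y None" using y(2) that sumV[of a] by simp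
    then have "\<sigma> * (\<Sum>f\<in>F'. u a f * y (Some f)) = \<sigma> * (e a * y None)" by simp
    then show ?thesis by (simp add: d_def s_def sum_distrib_left algebra_simps)
  qed
  have "\<exists>f\<in>F'. d f \<noteq> 0"
  proof (rule ccontr)
    assume "\<not> ?thesis"
    then have d0: "\<forall>f\<in>F'. y (Some f) = 0" by (simp add: d_def \<sigma>_def split: if_splits)
    obtain a where a: "a \<in> I" using ne I_def by blast
    have "(\<Sum>f\<in>F'. u a f * y (Some f)) = 0" using d0 by simp
    then have "e a * y None = 0" using y(2) a sumV[of a] by simp
    then have "y None = 0" by (simp add: e_def split: if_splits)
    then show False using y(1) d0 by (auto simp: V_def)
  qed
  define B where "B = {f\<in>F'. d f \<noteq> 0}"
  have finB: "finite B" "B \<noteq> {}" using finF' B_def \<open>\<exists>f\<in>F'. d f \<noteq> 0\<close> by auto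
  define b where "b = (\<lambda>f. if d f > 0 then (1 - x f) / d f else - x f / d f)"
  define t where "t = Min (b ` B)"
  have "t \<in> b ` B" using Min_in[of "b ` B"] finB t_def by simp
  then obtain f0 where f0: "f0 \<in> B" "b f0 = t" by auto
  have tle: "t \<le> b f" if "f \<in> B" for f using finB that t_def by simp
  have xF: "0 < x f \<and> x f < 1" if "f \<in> F'" for f using F' that Fr_def by auto
  have tpos: "t > 0"
  proof -
    have "b f0 > 0" using f0 xF[of f0] B_def
      by (auto simp: b_def field_simps divide_neg_pos)
    then show ?thesis using f0 by simp
  qed
  define x' where "x' = (\<lambda>g. if g \<in> F' then x g + t * d g else x g)"
  have bx': "\<forall>g\<in>G. 0 \<le> x' g \<and> x' g \<le> 1"
  proof
    fix g assume gG: "g \<in> G"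
    show "0 \<le> x' g \<and> x' g \<le> 1"
    proof (cases "g \<in> F'")
      case False then show ?thesis using bx gG by (simp add: x'_def)
    next
      case True
      note xg = xF[OF True]
      show ?thesis
      proof (cases "d g = 0")
        case True then show ?thesis using xg by (simp add: x'_def)
      next
        case False
        then have gB: "g \<in> B" using True B_def by simp
        have tb: "t \<le> b g" using tle[OF gB] .
        show ?thesis
        proof (cases "d g > 0")
          case True
          then have "t * d g \<le> 1 - x g" using tb by (simp add: b_def pos_le_divide_eq)
          moreover have "0 \<le> t * d g" using True tpos by simp
          ultimately show ?thesis using xg \<open>g \<in> F'\<close> by (simp add: x'_def)
        next
          case False
          then have dn: "d g < 0" using \<open>d g \<noteq> 0\<close> by simp
          have tb': "t \<le> - x g / d g" using tb False by (simp add: b_def)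
          have "(- x g / d g) * d g \<le> t * d g" using mult_right_mono_neg[OF tb', of "d g"] dn by linarith
          then have "- x g \<le> t * d g" using dn by simp
          moreover have "t * d g \<le> 0" using dn tpos by (simp add: mult_nonneg_nonpos)
          ultimately show ?thesis using xg \<open>g \<in> F'\<close> by (simp add: x'_def)
        qed
      qed
    qed
  qed
  have f0F: "f0 \<in> F'" "d f0 \<noteq> 0" using f0 B_def by auto
  have x'f0: "x' f0 = 0 \<or> x' f0 = 1"
    using f0F f0(2)[symmetric] by (auto simp: x'_def b_def)
  have sub: "{g\<in>G. 0 < x' g \<and> x' g < 1} \<subset> Fr"
  proof -
    have "{g\<in>G. 0 < x' g \<and> x' g < 1} \<subseteq> Fr - {f0}"
    proof
      fix g assume g: "g \<in> {g\<in>G. 0 < x' g \<and> x' g < 1}"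
      show "g \<in> Fr - {f0}"
      proof (cases "g \<in> F'")
        case True then show ?thesis using F' g x'f0 by auto
      next
        case False then show ?thesis using g f0F by (auto simp: x'_def Fr_def)
      qed
    qed
    moreover have "f0 \<in> Fr" using f0F F' by auto
    ultimately show ?thesis by blast
  qed
  have cardlt: "card {g\<in>G. 0 < x' g \<and> x' g < 1} < card Fr"
    using psubset_card_mono[OF finFr sub] .
  have sumeq: "(\<Sum>g\<in>G. u a g * (2 * x' g - 1)) = (\<Sum>g\<in>G. u a g * (2 * x g - 1)) + 2 * t * e a * s"
    if "a \<in> I" for a
  proof -
    have "(\<Sum>g\<in>G. u a g * (2 * x' g - 1)) =
        (\<Sum>g\<in>G. u a g * (2 * x g - 1) + 2 * t * (if g \<in> F' then u a g * d g else 0))"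
      by (rule sum.cong) (auto simp: x'_def algebra_simps)
    also have "\<dots> = (\<Sum>g\<in>G. u a g * (2 * x g - 1)) + 2 * t * (\<Sum>g\<in>G. if g \<in> F' then u a g * d g else 0)"
      by (simp add: sum.distrib sum_distrib_left)
    also have "(\<Sum>g\<in>G. if g \<in> F' then u a g * d g else 0) = (\<Sum>g\<in>F'. u a g * d g)"
      using sum.inter_restrict[OF finG, of "\<lambda>g. u a g * d g" F'] F'G
      by (simp add: Int_absorb1)
    also have "\<dots> = e a * s" using key that by simp
    finally show ?thesis by simp
  qed
  have c1': "\<forall>a\<in>A1. 0 \<le> (\<Sum>g\<in>G. u a g * (2 * x' g - 1))"
  proof
    fix a assume a: "a \<in> A1"
    have "0 \<le> 2 * t * e a * s" using tpos s0 a by (simp add: e_def)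
    then show "0 \<le> (\<Sum>g\<in>G. u a g * (2 * x' g - 1))"
      using sumeq[of a] a c1 I_def by simp
  qed
  have c2': "\<forall>a\<in>A2. (\<Sum>g\<in>G. u a g * (2 * x' g - 1)) \<le> 0"
  proof
    fix a assume a: "a \<in> A2"
    have "2 * t * e a * s \<le> 0"
    proof (cases "a \<in> A1")
      case True then show ?thesis using a disj by blast
    next
      case False then show ?thesis using tpos s0 by (simp add: e_def)
    qed
    moreover have "(\<Sum>g\<in>G. u a g * (2 * x g - 1)) \<le> 0" using c2 a by blast
    moreover have "a \<in> I" using a I_def by simp
    ultimately show "(\<Sum>g\<in>G. u a g * (2 * x' g - 1)) \<le> 0"
      using sumeq[of a] by linarith
  qed
  show ?thesis using bx' c1' c2' cardlt Fr_def by blast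
qed


lemma sum3:
  assumes "finite G" "G = X \<union> Y \<union> Z" "X \<inter> Y = {}" "X \<inter> Z = {}" "Y \<inter> Z = {}"
  shows "sum f G = sum f X + sum f Y + (sum f Z :: real)"
proof -
  have fin: "finite X" "finite Y" "finite Z" using assms by auto
  have "sum f G = sum f (X \<union> Y) + sum f Z"
    using assms fin by (simp add: sum.union_disjoint Int_Un_distrib2)
  also have "sum f (X \<union> Y) = sum f X + sum f Y" using fin assms by (simp add: sum.union_disjoint)
  finally show ?thesis .
qed

theorem mainTheorem13:
  fixes G :: "'g set" and A1 A2 :: "'a set" and u :: "'a \<Rightarrow> 'g \<Rightarrow> real"
  assumes "finite G"
    and "finite A1" and "finite A2" and "A1 \<inter> A2 = {}"
    and "card A1 \<ge> 1" and "card A2 \<ge> 1"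
    and "\<And>a g. a \<in> A1 \<union> A2 \<Longrightarrow> g \<in> G \<Longrightarrow> u a g \<ge> 0"
  shows "\<exists>G1 G2. G1 \<union> G2 = G \<and> G1 \<inter> G2 = {} \<and>
           (\<forall>a\<in>A1. EFc (card A1 + card A2 - 1) u a G1 G2) \<and>
           (\<forall>a\<in>A2. EFc (card A1 + card A2 - 1) u a G2 G1)"
proof -
  note finG = assms(1)
  define n where "n = card A1 + card A2"
  have cardI: "card (A1 \<union> A2) = n" using assms(2-4) n_def by (simp add: card_Un_disjoint)
  have neI: "A1 \<union> A2 \<noteq> {}" using assms(5) by auto
  define P where "P = (\<lambda>x::'g \<Rightarrow> real. (\<forall>g\<in>G. 0 \<le> x g \<and> x g \<le> 1)
     \<and> (\<forall>a\<in>A1. 0 \<le> (\<Sum>g\<in>G. u a g * (2 * x g - 1)))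
     \<and> (\<forall>a\<in>A2. (\<Sum>g\<in>G. u a g * (2 * x g - 1)) \<le> 0))"
  define fr where "fr = (\<lambda>x::'g \<Rightarrow> real. {g\<in>G. 0 < x g \<and> x g < 1})"
  have "P (\<lambda>_. 1/2)" by (simp add: P_def)
  then obtain x where Px: "P x" and minx: "\<forall>y. P y \<longrightarrow> card (fr x) \<le> card (fr y)"
    using ex_has_least_nat[where P=P and m="\<lambda>x. card (fr x)"] by blast
  have bx: "\<forall>g\<in>G. 0 \<le> x g \<and> x g \<le> 1"
    and c1: "\<forall>a\<in>A1. 0 \<le> (\<Sum>g\<in>G. u a g * (2 * x g - 1))"
    and c2: "\<forall>a\<in>A2. (\<Sum>g\<in>G. u a g * (2 * x g - 1)) \<le> 0" using Px P_def by auto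
  have small: "card (fr x) < n"
  proof (rule ccontr)
    assume "\<not> ?thesis"
    then have "card (A1 \<union> A2) \<le> card {g\<in>G. 0 < x g \<and> x g < 1}" using cardI fr_def by simp
    from reduce[OF finG _ neI assms(4) bx c1 c2 this] assms(2,3)
    obtain y where "P y" "card (fr y) < card (fr x)" by (auto simp: P_def fr_def)
    then show False using minx by fastforce
  qed
  have finfr: "finite (fr x)" using finG fr_def by simp
  define G1 where "G1 = {g\<in>G. 1/2 \<le> x g}"
  define G2 where "G2 = {g\<in>G. x g < 1/2}"
  have part: "G1 \<union> G2 = G" "G1 \<inter> G2 = {}" by (auto simp: G1_def G2_def)
  have ef1: "EFc (n - 1) u a G1 G2" if a: "a \<in> A1" for a
  proof -
    define C where "C = {g\<in>G. 0 < x g \<and> x g < 1/2}"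
    define D where "D = {g\<in>G. x g = 0}"
    have CG2: "C \<subseteq> G2" by (auto simp: C_def G2_def)
    have "C \<subseteq> fr x" by (auto simp: C_def fr_def)
    then have "card C \<le> card (fr x)" using card_mono finfr by blast
    then have cC: "card C \<le> n - 1" using small by simp
    have D: "G2 - C = D" using bx by (force simp: G2_def C_def D_def)
    have dec: "G = G1 \<union> C \<union> D" using bx by (force simp: G1_def C_def D_def)
    let ?f = "\<lambda>g. u a g * (2 * x g - 1)"
    have u0: "g \<in> G \<Longrightarrow> 0 \<le> u a g" for g using assms(7) a by blast
    have "(\<Sum>g\<in>G. ?f g) = sum ?f G1 + sum ?f C + sum ?f D"
      by (rule sum3[OF finG dec]) (auto simp: G1_def C_def D_def)
    moreover have "sum ?f G1 \<le> sum (u a) G1"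
    proof (rule sum_mono)
      fix g assume "g \<in> G1"
      then have "0 \<le> u a g" "x g \<le> 1" using u0 bx by (auto simp: G1_def)
      then show "?f g \<le> u a g" by (simp add: mult_left_le)
    qed
    moreover have "sum ?f C \<le> 0"
    proof (rule sum_nonpos)
      fix g assume "g \<in> C"
      then have "0 \<le> u a g" "x g < 1/2" using u0 by (auto simp: C_def)
      then show "?f g \<le> 0" by (simp add: mult_nonneg_nonpos)
    qed
    moreover have "sum ?f D = - sum (u a) D"
      by (simp add: D_def sum_negf[symmetric])
    moreover have "0 \<le> (\<Sum>g\<in>G. ?f g)" using c1 a by blast
    ultimately have "sum (u a) D \<le> sum (u a) G1" by linarith
    then show ?thesis unfolding EFc_def util_def using CG2 cC D by blast
  qed
  have ef2: "EFc (n - 1) u a G2 G1" if a: "a \<in> A2" for a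
  proof -
    define C where "C = {g\<in>G. 1/2 \<le> x g \<and> x g < 1}"
    define D where "D = {g\<in>G. x g = 1}"
    have CG1: "C \<subseteq> G1" by (auto simp: C_def G1_def)
    have "C \<subseteq> fr x" by (auto simp: C_def fr_def)
    then have "card C \<le> card (fr x)" using card_mono finfr by blast
    then have cC: "card C \<le> n - 1" using small by simp
    have D: "G1 - C = D" using bx by (force simp: G1_def C_def D_def)
    have dec: "G = G2 \<union> C \<union> D" using bx by (force simp: G2_def C_def D_def)
    let ?f = "\<lambda>g. u a g * (2 * x g - 1)"
    have u0: "g \<in> G \<Longrightarrow> 0 \<le> u a g" for g using assms(7) a by blast
    have "(\<Sum>g\<in>G. ?f g) = sum ?f G2 + sum ?f C + sum ?f D"
      by (rule sum3[OF finG dec]) (auto simp: G2_def C_def D_def)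
    moreover have "- sum (u a) G2 \<le> sum ?f G2"
      unfolding sum_negf[symmetric]
    proof (rule sum_mono)
      fix g assume "g \<in> G2"
      then have "0 \<le> u a g" "0 \<le> x g" using u0 bx by (auto simp: G2_def)
      then show "- u a g \<le> ?f g" by (simp add: algebra_simps)
    qed
    moreover have "0 \<le> sum ?f C"
    proof (rule sum_nonneg)
      fix g assume "g \<in> C"
      then have "0 \<le> u a g" "1/2 \<le> x g" using u0 by (auto simp: C_def)
      then show "0 \<le> ?f g" by simp
    qed
    moreover have "sum ?f D = sum (u a) D"
      by (simp add: D_def)
    moreover have "(\<Sum>g\<in>G. ?f g) \<le> 0" using c2 a by blast
    ultimately have "sum (u a) D \<le> sum (u a) G2" by linarith
    then show ?thesis unfolding EFc_def util_def using CG1 cC D by blast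
  qed
  show ?thesis using part ef1 ef2 n_def by blast
qed

end
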